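(* Let $1\leq\alpha,\beta<\omega$, let $P$ be a poset and $n\in\omega$. Then $P\models\psi_{\alpha\beta n}$ if and only if for all $p,q\in P$ with $p\not\leq q$, $\exists$ has an $n$-strategy for the $(\alpha+1,\beta+1)$-game with starting position $(\{p\},\{q\})$.
   Context: Work in the first-order signature with one binary relation $\leq$; write $\vec{x}_k=(x_1,\ldots,x_k)$. For $1\leq k<\omega$: $J_k(\vec{x}_k,y)$ holds under assignment $v$ iff $v(y)$ is the join of $\{v(x_1),\ldots,v(x_k)\}$, $M_k(\vec{x}_k,y)$ iff $v(y)$ is their meet; $C_k(\vec{x}_k,y)=\bigvee_{i=1}^k(y=x_i)$, $D_k=\neg C_k$; $C_{km}(\vec{x}_k,\vec{y}_m)$ holds iff $\{v(y_j)\}\subseteq\{v(x_i)\}$. Let $\sigma_k(\vec{x}_k,c)=\exists z(C_k(\vec{x}_k,z)\wedge z\leq c)$, $\tau_{kr}(\vec{x}_k,\vec{a}_r,c)=C_{kr}(\vec{x}_k,\vec{a}_r)\wedge M_r(\vec{a}_r,c)$, $\rho_{ks}(\vec{x}_k,\vec{b}_s)=\exists z(C_k(\vec{x}_k,z)\wedge J_s(\vec{b}_s,z))$. Define $\phi_{krs0}(\vec{x}_k,y)=D_k(\vec{x}_k,y)$ and $\phi_{krs(n+1)}(\vec{x}_k,y)=\forall\vec{a}_r\forall\vec{b}_s\forall c\Big(\big(\sigma_k(\vec{x}_k,c)\to\phi_{(k+1)rsn}(\vec{x}_k,c,y)\big)\wedge\big(\tau_{kr}(\vec{x}_k,\vec{a}_r,c)\to\phi_{(k+1)rsn}(\vec{x}_k,c,y)\big)\wedge\big(\rho_{ks}(\vec{x}_k,\vec{b}_s)\to\bigvee_{i=1}^s\phi_{(k+1)rsn}(\vec{x}_k,b_i,y)\big)\Big)$,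 and $\psi_{rsn}=\forall x\forall y(\neg(x\leq y)\to\phi_{1rsn}(x,y))$. The $(\alpha,\beta)$-game on $P$ with starting position $(U_0,V)$ is played between $\forall$ and $\exists$ in rounds $0,1,2,\ldots$ with a set $U$, initially $U_0$, and $V$ fixed. Each round $\forall$ moves and $\exists$ responds: (1) if $b\geq a$ for some $a\in U$, $\forall$ may play $(b)$ and $\exists$ must add $b$ to $U$; (2) if $A\subseteq U$ with $|A|<\alpha$ and $\bigwedge A$ exists, $\forall$ may play $A$ and $\exists$ must add $\bigwedge A$; (3) if $B\subseteq P$ with $|B|<\beta$ and $\bigvee B$ exists and lies in $U$, $\forall$ may play $B$ and $\exists$ must choose some $b\in B$ and add it to $U$. $\forall$ wins in round $n$ if $U\cap V\neq\emptyset$ at the beginning of round $n$; $\exists$ has an $n$-strategy if she can guarantee that $\forall$ does not win until at least round $n+1$. *)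

theory Defs
  imports Main
begin

text \<open>Posets are modelled by the type class order: the poset P is the universe of
the type 'a with its order. Tuples \<open>x_1..x_k\<close> are lists.\<close>

definition is_join :: "'a::order set \<Rightarrow> 'a \<Rightarrow> bool" where
  "is_join S y \<longleftrightarrow> (\<forall>x\<in>S. x \<le> y) \<and> (\<forall>z. (\<forall>x\<in>S. x \<le> z) \<longrightarrow> y \<le> z)"

definition is_meet :: "'a::order set \<Rightarrow> 'a \<Rightarrow> bool" where
  "is_meet S y \<longleftrightarrow> (\<forall>x\<in>S. y \<le> x) \<and> (\<forall>z. (\<forall>x\<in>S. z \<le> x) \<longrightarrow> z \<le> y)"

definition J_f :: "'a::order list \<Rightarrow> 'a \<Rightarrow> bool" where
  "J_f xs y \<longleftrightarrow> is_join (set xs) y"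

definition M_f :: "'a::order list \<Rightarrow> 'a \<Rightarrow> bool" where
  "M_f xs y \<longleftrightarrow> is_meet (set xs) y"

definition C_f :: "'a list \<Rightarrow> 'a \<Rightarrow> bool" where
  "C_f xs y \<longleftrightarrow> (\<exists>i<length xs. y = xs ! i)"

definition D_f :: "'a list \<Rightarrow> 'a \<Rightarrow> bool" where
  "D_f xs y \<longleftrightarrow> \<not> C_f xs y"

definition C2_f :: "'a list \<Rightarrow> 'a list \<Rightarrow> bool" where
  "C2_f xs ys \<longleftrightarrow> set ys \<subseteq> set xs"

definition sigma_f :: "'a::order list \<Rightarrow> 'a \<Rightarrow> bool" where
  "sigma_f xs c \<longleftrightarrow> (\<exists>z. C_f xs z \<and> z \<le> c)"

definition tau_f :: "'a::order list \<Rightarrow> 'a list \<Rightarrow> 'a \<Rightarrow> bool" where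
  "tau_f xs as c \<longleftrightarrow> C2_f xs as \<and> M_f as c"

definition rho_f :: "'a::order list \<Rightarrow> 'a list \<Rightarrow> bool" where
  "rho_f xs bs \<longleftrightarrow> (\<exists>z. C_f xs z \<and> J_f bs z)"

text \<open>\<open>phi r s n xs y\<close> is the truth value of \<open>\<phi>_{k r s n}(x_1..x_k, y)\<close> with k = length xs.\<close>

fun phi :: "nat \<Rightarrow> nat \<Rightarrow> nat \<Rightarrow> 'a::order list \<Rightarrow> 'a \<Rightarrow> bool" where
  "phi r s 0 xs y = D_f xs y"
| "phi r s (Suc n) xs y =
     (\<forall>as bs c. length as = r \<and> length bs = s \<longrightarrow>
        (sigma_f xs c \<longrightarrow> phi r s n (xs @ [c]) y) \<and>
        (tau_f xs as c \<longrightarrow> phi r s n (xs @ [c]) y) \<and>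
        (rho_f xs bs \<longrightarrow> (\<exists>i<s. phi r s n (xs @ [bs ! i]) y)))"

definition psi :: "nat \<Rightarrow> nat \<Rightarrow> nat \<Rightarrow> 'a::order itself \<Rightarrow> bool" where
  "psi r s n (_ :: 'a itself) \<longleftrightarrow> (\<forall>x y :: 'a. \<not> x \<le> y \<longrightarrow> phi r s n [x] y)"

text \<open>The (alpha,beta)-game: possible responses of \<exists> to a move of \<forall>.
  \<open>estrat \<alpha> \<beta> n U V\<close>: \<exists> has an n-strategy from position (U,V), i.e. she can
  guarantee that U \<inter> V = {} at the beginning of rounds 0..n. If she has no legal
  response to a move, she has no strategy.\<close>

fun estrat :: "nat \<Rightarrow> nat \<Rightarrow> nat \<Rightarrow> 'a::order set \<Rightarrow> 'a set \<Rightarrow> bool" where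
  "estrat \<alpha> \<beta> 0 U V = (U \<inter> V = {})"
| "estrat \<alpha> \<beta> (Suc n) U V =
     (U \<inter> V = {} \<and>
      (\<forall>b. (\<exists>a\<in>U. a \<le> b) \<longrightarrow> estrat \<alpha> \<beta> n (insert b U) V) \<and>
      (\<forall>A m. A \<subseteq> U \<and> finite A \<and> card A < \<alpha> \<and> is_meet A m \<longrightarrow>
             estrat \<alpha> \<beta> n (insert m U) V) \<and>
      (\<forall>B j. finite B \<and> card B < \<beta> \<and> is_join B j \<and> j \<in> U \<longrightarrow>
             (\<exists>b\<in>B. estrat \<alpha> \<beta> n (insert b U) V)))"

end

theory Submission
  imports Defs
begin

lemma C_f_set: "C_f xs y \<longleftrightarrow> y \<in> set xs"
  by (auto simp: C_f_def in_set_conv_nth)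

lemma phi_in: "y \<in> set xs \<Longrightarrow> \<not> phi r s m xs y"
proof (induction m arbitrary: xs)
  case 0
  then show ?case by (simp add: D_f_def C_f_set)
next
  case (Suc m)
  have "sigma_f xs y" using Suc.prems by (auto simp: sigma_f_def C_f_set)
  moreover have "\<not> phi r s m (xs @ [y]) y" using Suc.IH by simp
  ultimately have "\<exists>as bs c. length as = r \<and> length bs = s \<and> sigma_f xs c \<and> \<not> phi r s m (xs @ [c]) y"
    by (metis length_replicate)
  then show ?case by auto
qed

lemma list_of_set:
  assumes "finite A" "A \<noteq> {}" "card A \<le> k"
  obtains l where "length l = k" "set l = A"
proof -
  obtain l0 where l0: "set l0 = A" "distinct l0" using finite_distinct_list[OF assms(1)] by blast
  have len: "length l0 = card A" using l0 distinct_card by metis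
  have ne: "l0 \<noteq> []" using l0 assms(2) by auto
  let ?l = "l0 @ replicate (k - length l0) (hd l0)"
  have "length ?l = k" using len assms(3) by simp
  moreover have "set ?l = A" using l0 ne by (auto simp: hd_in_set)
  ultimately show ?thesis using that by blast
qed

lemma main:
  assumes r: "1 \<le> r" and s: "1 \<le> s"
  shows "xs \<noteq> [] \<Longrightarrow> phi r s n xs y \<longleftrightarrow> estrat (r + 1) (s + 1) n (set xs) {y}"
proof (induction n arbitrary: xs)
  case 0
  then show ?case by (auto simp: D_f_def C_f_set)
next
  case (Suc n)
  note IH = Suc.IH
  show ?case
  proof
    assume P: "phi r s (Suc n) xs y"
    have Pall: "\<And>as bs c. length as = r \<Longrightarrow> length bs = s \<Longrightarrow>
        (sigma_f xs c \<longrightarrow> phi r s n (xs @ [c]) y) \<and>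
        (tau_f xs as c \<longrightarrow> phi r s n (xs @ [c]) y) \<and>
        (rho_f xs bs \<longrightarrow> (\<exists>i<s. phi r s n (xs @ [bs ! i]) y))"
      using P by simp
    have sig: "\<And>c. sigma_f xs c \<Longrightarrow> phi r s n (xs @ [c]) y"
      using Pall[of "replicate r y" "replicate s y"] by simp
    have yn: "y \<notin> set xs" using phi_in P by blast
    have m1: "\<forall>b. (\<exists>a\<in>set xs. a \<le> b) \<longrightarrow> estrat (r+1) (s+1) n (insert b (set xs)) {y}"
    proof (intro allI impI)
      fix b assume "\<exists>a\<in>set xs. a \<le> b"
      then have "sigma_f xs b" by (auto simp: sigma_f_def C_f_set)
      then have "phi r s n (xs @ [b]) y" by (rule sig)
      then show "estrat (r+1) (s+1) n (insert b (set xs)) {y}" using IH[of "xs @ [b]"] by simp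
    qed
    have m2: "\<forall>A m. A \<subseteq> set xs \<and> finite A \<and> card A < r+1 \<and> is_meet A m \<longrightarrow>
             estrat (r+1) (s+1) n (insert m (set xs)) {y}"
    proof (intro allI impI)
      fix A m assume h: "A \<subseteq> set xs \<and> finite A \<and> card A < r+1 \<and> is_meet A m"
      show "estrat (r+1) (s+1) n (insert m (set xs)) {y}"
      proof (cases "A = {}")
        case True
        then have "hd xs \<le> m" using h by (auto simp: is_meet_def)
        then show ?thesis using m1 Suc.prems hd_in_set[of xs] by blast
      next
        case False
        obtain as where as: "length as = r" "set as = A"
          using list_of_set[of A r] h False by force
        have "tau_f xs as m" using h as by (auto simp: tau_f_def C2_f_def M_f_def)
        then have "phi r s n (xs @ [m]) y" using Pall[of as "replicate s y" m] as by simp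
        then show ?thesis using IH[of "xs @ [m]"] by simp
      qed
    qed
    have m3: "\<forall>B j. finite B \<and> card B < s+1 \<and> is_join B j \<and> j \<in> set xs \<longrightarrow>
             (\<exists>b\<in>B. estrat (r+1) (s+1) n (insert b (set xs)) {y})"
    proof (intro allI impI)
      fix B j assume h: "finite B \<and> card B < s+1 \<and> is_join B j \<and> j \<in> set xs"
      show "\<exists>b\<in>B. estrat (r+1) (s+1) n (insert b (set xs)) {y}"
      proof (cases "B = {}")
        case True
        then have "j \<le> y" using h by (auto simp: is_join_def)
        then have "sigma_f xs y" using h by (auto simp: sigma_f_def C_f_set)
        then have "phi r s n (xs @ [y]) y" by (rule sig)
        then show ?thesis using phi_in[of y "xs @ [y]"] by simp
      next
        case False
        obtain bs where bs: "length bs = s" "set bs = B"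
          using list_of_set[of B s] h False by force
        have "rho_f xs bs" using h bs by (auto simp: rho_f_def C_f_set J_f_def)
        then obtain i where i: "i < s" "phi r s n (xs @ [bs ! i]) y"
          using Pall[of "replicate r y" bs] bs by auto
        have "bs ! i \<in> B" using i bs by auto
        then show ?thesis using i IH[of "xs @ [bs ! i]"] by auto
      qed
    qed
    show "estrat (r+1) (s+1) (Suc n) (set xs) {y}"
      using yn m1 m2 m3 by (simp del: estrat.simps add: estrat.simps(2))
  next
    assume E: "estrat (r+1) (s+1) (Suc n) (set xs) {y}"
    have m1: "\<And>b. (\<exists>a\<in>set xs. a \<le> b) \<Longrightarrow> estrat (r+1) (s+1) n (insert b (set xs)) {y}"
      using E by simp
    have m2: "\<And>A m. A \<subseteq> set xs \<Longrightarrow> finite A \<Longrightarrow> card A < r+1 \<Longrightarrow> is_meet A m \<Longrightarrow>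
             estrat (r+1) (s+1) n (insert m (set xs)) {y}"
      using E by simp
    have m3: "\<And>B j. finite B \<Longrightarrow> card B < s+1 \<Longrightarrow> is_join B j \<Longrightarrow> j \<in> set xs \<Longrightarrow>
             (\<exists>b\<in>B. estrat (r+1) (s+1) n (insert b (set xs)) {y})"
      using E by (simp only: estrat.simps)
    show "phi r s (Suc n) xs y"
    proof (simp only: phi.simps(2), intro allI impI conjI)
      fix as bs :: "'a list" and c
      assume len: "length as = r \<and> length bs = s"
      { assume "sigma_f xs c"
        then have "estrat (r+1) (s+1) n (insert c (set xs)) {y}"
          using m1 by (auto simp: sigma_f_def C_f_set)
        then show "phi r s n (xs @ [c]) y" using IH[of "xs @ [c]"] by simp }
      { assume "tau_f xs as c"
        then have "set as \<subseteq> set xs" "is_meet (set as) c"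
          by (auto simp: tau_f_def C2_f_def M_f_def)
        moreover have "card (set as) < r + 1" using card_length[of as] len by simp
        ultimately have "estrat (r+1) (s+1) n (insert c (set xs)) {y}"
          using m2 by blast
        then show "phi r s n (xs @ [c]) y" using IH[of "xs @ [c]"] by simp }
      { assume "rho_f xs bs"
        then obtain z where "z \<in> set xs" "is_join (set bs) z"
          by (auto simp: rho_f_def C_f_set J_f_def)
        moreover have "card (set bs) < s + 1" using card_length[of bs] len by simp
        ultimately obtain b where b: "b \<in> set bs" "estrat (r+1) (s+1) n (insert b (set xs)) {y}"
          using m3 by blast
        then obtain i where i: "i < length bs" "bs ! i = b" by (auto simp: in_set_conv_nth)
        then show "\<exists>i<s. phi r s n (xs @ [bs ! i]) y"
          using b IH[of "xs @ [b]"] len by auto }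
    qed
  qed
qed

theorem proposition5p4:
  fixes \<alpha> \<beta> n :: nat
  assumes "1 \<le> \<alpha>" and "1 \<le> \<beta>"
  shows "psi \<alpha> \<beta> n TYPE('a::order) \<longleftrightarrow>
         (\<forall>p q :: 'a. \<not> p \<le> q \<longrightarrow> estrat (\<alpha> + 1) (\<beta> + 1) n {p} {q})"
  using main[OF assms, where xs="[_]"] unfolding psi_def by (metis list.discI list.set(1) list.simps(15))

end
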